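(* Let $p,r$ be positive integers and $q=p+r$. Then the map $\Phi:U_{pq}(\mathbb{H})\to\mathbb{H}^{r\times p}$, $\Phi(Q)=Q_2(Q_0-Q_1)^{-1}$, is a $\mathbf{GL}_p(\mathbb{H})$-invariant harmonic map on $U_{pq}(\mathbb{H})$, equipped with the semi-Euclidean metric (and $\mathbb{H}^{r\times p}$ with its flat metric).
   Context: Elements of $\mathbb{H}^{(p+q)\times p}$ are written $Q=(Q_0;Q_1;Q_2)$ with $Q_0,Q_1\in\mathbb{H}^{p\times p}$, $Q_2\in\mathbb{H}^{r\times p}$. $U_{pq}(\mathbb{H})=\{Q: -Q_0^*Q_0+Q_1^*Q_1+Q_2^*Q_2<0\}$, meaning $x^*(\cdot)x<0$ for every non-zero $x\in\mathbb{H}^p$; on it $Q_0-Q_1$ is invertible. $\mathbf{GL}_p(\mathbb{H})$ acts by right multiplication. The semi-Euclidean metric is $(X,Y)=\mathfrak{Re}\,\mathrm{trace}(X^*\mathrm{diag}(-I_p,I_q)Y)$. Harmonic means vanishing tension field, i.e. every real component of $\Phi$ is annihilated by the Laplace–Beltrami operator of the semi-Euclidean metric. *)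

theory Defs
  imports "HOL-Analysis.Analysis"
begin

section \<open>Quaternions as real 4-vectors (components 1,2,3,4 = real, i, j, k parts)\<close>

type_synonym quat = "real^4"

definition qmult :: "quat \<Rightarrow> quat \<Rightarrow> quat" where
  "qmult a b = vector
     [a$1*b$1 - a$2*b$2 - a$3*b$3 - a$4*b$4,
      a$1*b$2 + a$2*b$1 + a$3*b$4 - a$4*b$3,
      a$1*b$3 - a$2*b$4 + a$3*b$1 + a$4*b$2,
      a$1*b$4 + a$2*b$3 - a$3*b$2 + a$4*b$1]"

definition qconj :: "quat \<Rightarrow> quat" where
  "qconj a = vector [a$1, - a$2, - a$3, - a$4]"

definition qone :: quat where
  "qone = vector [1, 0, 0, 0]"

section \<open>Quaternionic matrices: A :: quat^'n^'m is an m x n matrix, entry A$i$j\<close>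

definition qmat_mul :: "quat^'n^'m \<Rightarrow> quat^'k^'n \<Rightarrow> quat^'k^'m" where
  "qmat_mul A B = (\<chi> i k. \<Sum>j\<in>UNIV. qmult (A$i$j) (B$j$k))"

definition qmat_id :: "quat^'n^'n" where
  "qmat_id = (\<chi> i j. if i = j then qone else 0)"

definition qadj :: "quat^'n^'m \<Rightarrow> quat^'m^'n" where
  "qadj A = (\<chi> i j. qconj (A$j$i))"

definition qinvertible :: "quat^'n^'n \<Rightarrow> bool" where
  "qinvertible A \<longleftrightarrow> (\<exists>B. qmat_mul A B = qmat_id \<and> qmat_mul B A = qmat_id)"

definition qinv :: "quat^'n^'n \<Rightarrow> quat^'n^'n" where
  "qinv A = (SOME B. qmat_mul A B = qmat_id \<and> qmat_mul B A = qmat_id)"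

definition qmat_vec :: "quat^'n^'m \<Rightarrow> quat^'n \<Rightarrow> quat^'m" where
  "qmat_vec A x = (\<chi> i. \<Sum>j\<in>UNIV. qmult (A$i$j) (x$j))"

definition qform :: "quat^'n \<Rightarrow> quat^'n^'n \<Rightarrow> quat" where
  "qform x M = (\<Sum>i\<in>UNIV. qmult (qconj (x$i)) (qmat_vec M x $ i))"

text \<open>Elements Q = (Q0;Q1;Q2) of H^((p+q) x p), q = p + r, are triples.\<close>
type_synonym ('p,'r) qblock = "(quat^'p^'p) \<times> (quat^'p^'p) \<times> (quat^'p^'r)"

definition Upq :: "('p::finite,'r::finite) qblock set" where
  "Upq = {(Q0,Q1,Q2). \<forall>x::quat^'p. x \<noteq> 0 \<longrightarrow>
      (let h = qform x (- qmat_mul (qadj Q0) Q0 + qmat_mul (qadj Q1) Q1 + qmat_mul (qadj Q2) Q2)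
       in h$2 = 0 \<and> h$3 = 0 \<and> h$4 = 0 \<and> h$1 < 0)}"

definition gact :: "('p::finite,'r::finite) qblock \<Rightarrow> quat^'p^'p \<Rightarrow> ('p,'r) qblock" where
  "gact Q g = (case Q of (Q0,Q1,Q2) \<Rightarrow> (qmat_mul Q0 g, qmat_mul Q1 g, qmat_mul Q2 g))"

definition Phi :: "('p::finite,'r::finite) qblock \<Rightarrow> quat^'p^'r" where
  "Phi Q = (case Q of (Q0,Q1,Q2) \<Rightarrow> qmat_mul Q2 (qinv (Q0 - Q1)))"

text \<open>For a constant metric that is diagonal with entries s b = +-1 in the orthonormal
  basis Basis, the Laplace-Beltrami operator is sum_b s b * d^2/db^2. A map into the flat
  space 'b is harmonic iff it is twice differentiable and this operator kills it
  (componentwise, i.e. as a vector).\<close>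
definition semi_harmonic_on ::
  "('a::euclidean_space \<Rightarrow> real) \<Rightarrow> 'a set \<Rightarrow> ('a \<Rightarrow> 'b::real_normed_vector) \<Rightarrow> bool" where
  "semi_harmonic_on s U f \<longleftrightarrow>
    (\<exists>(D1 :: 'a \<Rightarrow> ('a \<Rightarrow>\<^sub>L 'b)) (D2 :: 'a \<Rightarrow> 'a \<Rightarrow> ('a \<Rightarrow>\<^sub>L 'b)).
      \<forall>x\<in>U. (f has_derivative blinfun_apply (D1 x)) (at x)
          \<and> (D1 has_derivative D2 x) (at x)
          \<and> (\<Sum>b\<in>Basis. s b *\<^sub>R blinfun_apply (D2 x b) b) = 0)"

text \<open>Signature of the metric Re trace(X^* diag(-I_p, I_q) Y) on basis vectors:
  -1 on the Q0 block, +1 on the Q1 and Q2 blocks.\<close>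
definition usig :: "('p::finite,'r::finite) qblock \<Rightarrow> real" where
  "usig v = (if fst v \<noteq> 0 then -1 else 1)"

end

theory Submission
  imports Defs
begin


lemma qm1: "qmult a b $ 1 = a$1*b$1 - a$2*b$2 - a$3*b$3 - a$4*b$4"
  by (simp add: qmult_def vector_def)
lemma qm2: "qmult a b $ 2 = a$1*b$2 + a$2*b$1 + a$3*b$4 - a$4*b$3"
  by (simp add: qmult_def vector_def)
lemma qm3: "qmult a b $ 3 = a$1*b$3 - a$2*b$4 + a$3*b$1 + a$4*b$2"
  by (simp add: qmult_def vector_def)
lemma qm4: "qmult a b $ 4 = a$1*b$4 + a$2*b$3 - a$3*b$2 + a$4*b$1"
  by (simp add: qmult_def vector_def)
lemma qc1: "qconj a $ 1 = a$1" by (simp add: qconj_def vector_def)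
lemma qc2: "qconj a $ 2 = - a$2" by (simp add: qconj_def vector_def)
lemma qc3: "qconj a $ 3 = - a$3" by (simp add: qconj_def vector_def)
lemma qc4: "qconj a $ 4 = - a$4" by (simp add: qconj_def vector_def)
lemma qo1: "qone $ 1 = 1" by (simp add: qone_def vector_def)
lemma qo2: "qone $ 2 = 0" by (simp add: qone_def vector_def)
lemma qo3: "qone $ 3 = 0" by (simp add: qone_def vector_def)
lemma qo4: "qone $ 4 = 0" by (simp add: qone_def vector_def)

lemmas qcomp = qm1 qm2 qm3 qm4 qc1 qc2 qc3 qc4 qo1 qo2 qo3 qo4

lemma quat_eq: "(a::quat) = b \<longleftrightarrow> a$1 = b$1 \<and> a$2 = b$2 \<and> a$3 = b$3 \<and> a$4 = b$4"
  by (simp add: vec_eq_iff forall_4)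

lemma qmult_bilinear: "bilinear qmult"
  unfolding bilinear_def
  by (auto intro!: linearI simp: quat_eq qcomp algebra_simps)

lemma qmult_bb: "bounded_bilinear qmult"
  using qmult_bilinear bilinear_conv_bounded_bilinear by blast

interpretation qm: bounded_bilinear qmult by (rule qmult_bb)

lemma qmult_assoc: "qmult (qmult a b) c = qmult a (qmult b c)"
  by (simp add: quat_eq qcomp algebra_simps)
lemma qmult_one_left[simp]: "qmult qone a = a"
  by (simp add: quat_eq qcomp)
lemma qmult_one_right[simp]: "qmult a qone = a"
  by (simp add: quat_eq qcomp)
lemma qconj_qmult: "qconj (qmult a b) = qmult (qconj b) (qconj a)"
  by (simp add: quat_eq qcomp algebra_simps)
lemma qconj_linear: "linear qconj"
  by (auto intro!: linearI simp: quat_eq qcomp algebra_simps)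
lemma qconj_conj_re: "qmult (qconj a) a $ 1 = (norm a)^2"
  by (simp add: qcomp norm_vec_def L2_set_def sum_4 power2_eq_square)

lemma qconj_add: "qconj (a + b) = qconj a + qconj b" by (simp add: quat_eq qcomp)
lemma qconj_sum: "qconj (sum f S) = sum (\<lambda>i. qconj (f i)) S"
  using linear_sum[OF qconj_linear] .

lemma qmat_mul_nth: "qmat_mul A B $ i $ k = (\<Sum>j\<in>UNIV. qmult (A$i$j) (B$j$k))"
  by (simp add: qmat_mul_def)
lemma qmat_vec_nth: "qmat_vec A x $ i = (\<Sum>j\<in>UNIV. qmult (A$i$j) (x$j))"
  by (simp add: qmat_vec_def)

lemma qmat_mul_bilinear: "bilinear (qmat_mul :: quat^'n::finite^'m::finite \<Rightarrow> quat^'k::finite^'n \<Rightarrow> quat^'k^'m)"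
  unfolding bilinear_def
  by (auto intro!: linearI simp: vec_eq_iff qmat_mul_nth qm.add_left qm.add_right
       qm.scaleR_left qm.scaleR_right sum.distrib scaleR_sum_right)

lemma qmat_mul_bb: "bounded_bilinear (qmat_mul :: quat^'n::finite^'m::finite \<Rightarrow> quat^'k::finite^'n \<Rightarrow> quat^'k^'m)"
  using qmat_mul_bilinear bilinear_conv_bounded_bilinear by blast

lemma qmat_vec_bilinear: "bilinear (qmat_vec :: quat^'n::finite^'m::finite \<Rightarrow> quat^'n \<Rightarrow> quat^'m)"
  unfolding bilinear_def
  by (auto intro!: linearI simp: vec_eq_iff qmat_vec_nth qm.add_left qm.add_right
       qm.scaleR_left qm.scaleR_right sum.distrib scaleR_sum_right)

lemma qmat_vec_bb: "bounded_bilinear (qmat_vec :: quat^'n::finite^'m::finite \<Rightarrow> quat^'n \<Rightarrow> quat^'m)"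
  using qmat_vec_bilinear bilinear_conv_bounded_bilinear by blast

lemmas mm_simps = bounded_bilinear.add_left[OF qmat_mul_bb] bounded_bilinear.add_right[OF qmat_mul_bb]
  bounded_bilinear.diff_left[OF qmat_mul_bb] bounded_bilinear.diff_right[OF qmat_mul_bb]
  bounded_bilinear.minus_left[OF qmat_mul_bb] bounded_bilinear.minus_right[OF qmat_mul_bb]
  bounded_bilinear.zero_left[OF qmat_mul_bb] bounded_bilinear.zero_right[OF qmat_mul_bb]
  bounded_bilinear.scaleR_left[OF qmat_mul_bb] bounded_bilinear.scaleR_right[OF qmat_mul_bb]

lemmas mv_simps = bounded_bilinear.add_left[OF qmat_vec_bb] bounded_bilinear.add_right[OF qmat_vec_bb]
  bounded_bilinear.diff_left[OF qmat_vec_bb] bounded_bilinear.diff_right[OF qmat_vec_bb]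
  bounded_bilinear.minus_left[OF qmat_vec_bb] bounded_bilinear.minus_right[OF qmat_vec_bb]
  bounded_bilinear.zero_left[OF qmat_vec_bb] bounded_bilinear.zero_right[OF qmat_vec_bb]

lemma qmat_mul_assoc: "qmat_mul (qmat_mul A B) C = qmat_mul A (qmat_mul B C)"
proof -
  have "\<And>i k. (\<Sum>j\<in>UNIV. qmult (\<Sum>l\<in>UNIV. qmult (A$i$l) (B$l$j)) (C$j$k))
     = (\<Sum>l\<in>UNIV. qmult (A$i$l) (\<Sum>j\<in>UNIV. qmult (B$l$j) (C$j$k)))"
    by (simp add: qm.sum_left qm.sum_right qmult_assoc) (rule sum.swap)
  then show ?thesis by (simp add: vec_eq_iff qmat_mul_nth)
qed

lemma qmat_vec_mul: "qmat_vec (qmat_mul A B) x = qmat_vec A (qmat_vec B x)"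
proof -
  have "\<And>i. (\<Sum>j\<in>UNIV. qmult (\<Sum>l\<in>UNIV. qmult (A$i$l) (B$l$j)) (x$j))
     = (\<Sum>l\<in>UNIV. qmult (A$i$l) (\<Sum>j\<in>UNIV. qmult (B$l$j) (x$j)))"
    by (simp add: qm.sum_left qm.sum_right qmult_assoc) (rule sum.swap)
  then show ?thesis by (simp add: vec_eq_iff qmat_mul_nth qmat_vec_nth)
qed

lemma qmult_id_sum1: fixes a :: "'n::finite \<Rightarrow> quat" shows "(\<Sum>j\<in>UNIV. qmult (if i = j then qone else 0) (a j)) = a i"
proof -
  have "\<And>j. qmult (if i = j then qone else 0) (a j) = (if i = j then a j else 0)"
    by (simp add: qm.zero_left)
  then show ?thesis by (simp add: sum.delta sum.delta')
qed
lemma qmult_id_sum2: fixes a :: "'n::finite \<Rightarrow> quat" shows "(\<Sum>j\<in>UNIV. qmult (a j) (if j = k then qone else 0)) = a k"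
proof -
  have "\<And>j. qmult (a j) (if j = k then qone else 0) = (if j = k then a j else 0)"
    by (simp add: qm.zero_right)
  then show ?thesis by (simp add: sum.delta sum.delta')
qed
lemma qmat_id_left0: "qmat_mul qmat_id A $ i $ k = A $ i $ k"
  by (simp add: qmat_mul_nth qmat_id_def qmult_id_sum1)
lemma qmat_id_right0: "qmat_mul A qmat_id $ i $ k = A $ i $ k"
  by (simp add: qmat_mul_nth qmat_id_def qmult_id_sum2)
lemma qmat_id_left[simp]: "qmat_mul qmat_id A = A"
  by (simp add: vec_eq_iff qmat_id_left0)
lemma qmat_id_right[simp]: "qmat_mul A qmat_id = A"
  by (simp add: vec_eq_iff qmat_id_right0)

definition qcol :: "'k \<Rightarrow> quat^'k^'n \<Rightarrow> quat^'n" where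
  "qcol k X = (\<chi> j. X$j$k)"

lemma qmat_mul_col: "qmat_mul W X $ i $ k = qmat_vec W (qcol k X) $ i"
  by (simp add: qmat_mul_nth qmat_vec_nth qcol_def)



definition qe :: "'n \<Rightarrow> quat^'n" where "qe k = (\<chi> i. if i = k then qone else 0)"

lemma qmat_vec_linear: "linear (qmat_vec W)"
  using bounded_bilinear.bounded_linear_right[OF qmat_vec_bb] bounded_linear.linear by blast

lemma inj_qinvertible:
  fixes W :: "quat^'n::finite^'n"
  assumes inj0: "\<And>x. qmat_vec W x = 0 \<Longrightarrow> x = 0"
  shows "qinvertible W"
proof -
  have "inj (qmat_vec W)"
  proof (rule injI)
    fix x y assume "qmat_vec W x = qmat_vec W y"
    then have "qmat_vec W (x - y) = 0" by (simp add: mv_simps)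
    then show "x = y" using inj0[of "x - y"] by simp
  qed
  then have "surj (qmat_vec W)" using linear_inj_imp_surj qmat_vec_linear by blast
  then have "\<forall>k. \<exists>x. qmat_vec W x = qe k" by (metis surjD)
  then obtain b where b: "\<And>k. qmat_vec W (b k) = qe k" by metis
  define B where "B = (\<chi> j k. b k $ j)"
  have colB: "qcol k B = b k" for k by (simp add: qcol_def B_def vec_eq_iff)
  have WB: "qmat_mul W B = qmat_id"
  proof -
    have "qmat_mul W B $ i $ k = qmat_id $ i $ k" for i k
      by (simp add: qmat_mul_col colB b qe_def qmat_id_def)
    then show ?thesis by (simp add: vec_eq_iff)
  qed
  define X where "X = qmat_mul B W - qmat_id"
  have "qmat_mul W X = 0"
    by (simp add: X_def mm_simps qmat_mul_assoc[symmetric] WB)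
  then have "qmat_vec W (qcol k X) = 0" for k
    by (metis qmat_mul_col vec_eq_iff zero_index)
  then have "qcol k X = 0" for k using inj0 by blast
  then have "X = 0" by (simp add: vec_eq_iff qcol_def)
  then have "qmat_mul B W = qmat_id" by (simp add: X_def)
  then show ?thesis using WB unfolding qinvertible_def by blast
qed

lemma qinv_props: "qinvertible W \<Longrightarrow> qmat_mul W (qinv W) = qmat_id \<and> qmat_mul (qinv W) W = qmat_id"
  unfolding qinvertible_def qinv_def by (rule someI_ex)

lemma qinv_unique: assumes "qmat_mul W B = qmat_id" "qinvertible W" shows "qinv W = B"
proof -
  have "qinv W = qmat_mul (qinv W) (qmat_mul W B)" using assms by simp
  also have "\<dots> = B" using qinv_props[OF assms(2)] by (simp add: qmat_mul_assoc[symmetric])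
  finally show ?thesis .
qed

lemma qinv_mul: assumes "qinvertible A" "qinvertible g"
  shows "qinv (qmat_mul A g) = qmat_mul (qinv g) (qinv A)"
proof -
  note a = qinv_props[OF assms(1)] and g = qinv_props[OF assms(2)]
  have 1: "qmat_mul (qmat_mul A g) (qmat_mul (qinv g) (qinv A)) = qmat_id"
    by (metis a g qmat_mul_assoc qmat_id_left)
  have 2: "qmat_mul (qmat_mul (qinv g) (qinv A)) (qmat_mul A g) = qmat_id"
    by (metis a g qmat_mul_assoc qmat_id_left)
  show ?thesis using 1 2 qinv_unique unfolding qinvertible_def by blast
qed

lemma qform_add: "qform x (M + N) = qform x M + qform x N"
  by (simp add: qform_def mv_simps qm.add_right sum.distrib)

lemma qform_minus: "qform x (- M) = - qform x M"
  by (simp add: qform_def mv_simps qm.minus_right sum_negf)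

lemma qform_diff: "qform x (M - N) = qform x M - qform x N"
  by (simp add: qform_def mv_simps qm.diff_right sum_subtractf)

lemma qform_adj: "qform x (qmat_mul (qadj A) A) $ 1 = (norm (qmat_vec A x))^2"
proof -
  define y where "y = qmat_vec A x"
  have "qform x (qmat_mul (qadj A) A) = (\<Sum>i\<in>UNIV. qmult (qconj (x$i)) (\<Sum>k\<in>UNIV. qmult (qconj (A$k$i)) (y$k)))"
    by (simp add: qform_def qmat_vec_mul y_def[symmetric] qmat_vec_nth qadj_def)
  also have "\<dots> = (\<Sum>i\<in>UNIV. \<Sum>k\<in>UNIV. qmult (qconj (qmult (A$k$i) (x$i))) (y$k))"
    by (simp add: qm.sum_right qconj_qmult qmult_assoc)
  also have "\<dots> = (\<Sum>k\<in>UNIV. \<Sum>i\<in>UNIV. qmult (qconj (qmult (A$k$i) (x$i))) (y$k))"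
    by (rule sum.swap)
  also have "\<dots> = (\<Sum>k\<in>UNIV. qmult (qconj (y$k)) (y$k))"
    by (simp add: qm.sum_left qconj_sum y_def qmat_vec_nth)
  finally have "qform x (qmat_mul (qadj A) A) $ 1 = (\<Sum>k\<in>UNIV. (norm (y$k))^2)"
    by (simp add: qconj_conj_re)
  also have "\<dots> = (norm y)^2"
    by (simp add: norm_vec_def L2_set_def sum_nonneg)
  finally show ?thesis by (simp add: y_def)
qed

lemma Upq_inj:
  assumes "(Q0,Q1,Q2) \<in> Upq" "qmat_vec (Q0 - Q1) x = 0"
  shows "x = 0"
proof (rule ccontr)
  assume "x \<noteq> 0"
  then have "qform x (- qmat_mul (qadj Q0) Q0 + qmat_mul (qadj Q1) Q1 + qmat_mul (qadj Q2) Q2) $ 1 < 0"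
    using assms(1) unfolding Upq_def Let_def by auto
  then have "- (norm (qmat_vec Q0 x))\<^sup>2 + (norm (qmat_vec Q1 x))\<^sup>2 + (norm (qmat_vec Q2 x))\<^sup>2 < 0"
    by (simp add: qform_add qform_minus qform_diff qform_adj)
  moreover have "qmat_vec Q0 x = qmat_vec Q1 x" using assms(2) by (simp add: mv_simps)
  ultimately show False by simp
qed

lemma Upq_invertible: "(Q0,Q1,Q2) \<in> Upq \<Longrightarrow> qinvertible (Q0 - Q1)"
  using Upq_inj inj_qinvertible by blast

lemma invariance:
  "\<forall>Q\<in>(Upq :: ('p::finite,'r::finite) qblock set). \<forall>g::quat^'p^'p.
            qinvertible g \<longrightarrow> Phi (gact Q g) = Phi Q"
proof (intro ballI allI impI)
  fix Q :: "('p,'r) qblock" and g :: "quat^'p^'p"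
  assume Q: "Q \<in> Upq" and g: "qinvertible g"
  obtain Q0 Q1 Q2 where QQ: "Q = (Q0,Q1,Q2)" by (cases Q) auto
  have W: "qinvertible (Q0 - Q1)" using Q QQ Upq_invertible by blast
  have "Phi (gact Q g) = qmat_mul (qmat_mul Q2 g) (qinv (qmat_mul (Q0 - Q1) g))"
    by (simp add: QQ gact_def Phi_def mm_simps)
  also have "\<dots> = qmat_mul (qmat_mul Q2 g) (qmat_mul (qinv g) (qinv (Q0 - Q1)))"
    by (simp add: qinv_mul W g)
  also have "\<dots> = Phi Q"
    using qinv_props[OF g] by (simp add: QQ Phi_def qmat_mul_assoc[symmetric]) (simp add: qmat_mul_assoc)
  finally show "Phi (gact Q g) = Phi Q" .
qed



type_synonym 'n qsq = "quat^'n^'n"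


lemmas mmD = bounded_bilinear.FDERIV[OF qmat_mul_bb]

lemma qmat_vec_id0: "qmat_vec qmat_id x $ i = x $ i"
  by (simp add: qmat_vec_nth qmat_id_def qmult_id_sum1)
lemma qmat_vec_id[simp]: "qmat_vec qmat_id x = x"
  by (simp add: vec_eq_iff qmat_vec_id0)

lemma open_qinvertible: "open {W::quat^'n::finite^'n. qinvertible W}"
proof (rule openI)
  fix W :: "quat^'n^'n" assume "W \<in> {W. qinvertible W}"
  then have W: "qinvertible W" by simp
  define B where "B = qinv W"
  have BW: "qmat_mul B W = qmat_id" using qinv_props[OF W] B_def by simp
  obtain K where K: "K > 0" "\<And>A x. norm (qmat_vec (A::quat^'n^'n) x) \<le> norm A * norm x * K"
    using bounded_bilinear.pos_bounded[OF qmat_vec_bb] by blast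
  define e where "e = 1 / (K * K * (norm B + 1))"
  have nb: "0 < norm B + 1" by (smt (verit) norm_ge_zero)
  have e: "e > 0" using K nb by (simp add: e_def zero_less_mult_iff)
  have "ball W e \<subseteq> {W. qinvertible W}"
  proof
    fix W' assume W': "W' \<in> ball W e"
    define H where "H = W' - W"
    have nH: "norm H < e" using W' by (simp add: H_def dist_norm norm_minus_commute)
    have "qinvertible W'"
    proof (rule inj_qinvertible)
      fix x assume x: "qmat_vec W' x = 0"
      have Wx: "qmat_vec W x = - qmat_vec H x" using x by (simp add: H_def mv_simps)
      have "x = qmat_vec (qmat_mul B W) x" by (simp add: BW)
      also have "\<dots> = - qmat_vec B (qmat_vec H x)" by (simp add: qmat_vec_mul Wx mv_simps)
      finally have xeq: "x = - qmat_vec B (qmat_vec H x)" .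
      have "norm x = norm (qmat_vec B (qmat_vec H x))"
        using arg_cong[OF xeq, of norm] by (simp only: norm_minus_cancel)
      also have "\<dots> \<le> norm B * norm (qmat_vec H x) * K" by (rule K(2))
      also have "\<dots> \<le> norm B * (norm H * norm x * K) * K"
        using K(1) K(2)[of H x] by (intro mult_right_mono mult_left_mono) auto
      finally have 1: "norm x \<le> norm B * (norm H * norm x * K) * K" .
      define c where "c = norm B * norm H * K * K"
      have eq: "norm B * (norm H * norm x * K) * K = c * norm x" by (simp add: c_def algebra_simps)
      have "norm B * norm H * K * K \<le> norm B * e * K * K"
        using nH K by (intro mult_right_mono mult_left_mono) auto
      also have "\<dots> = norm B / (norm B + 1)"
      proof -
        have nz: "K * K * (norm B + 1) \<noteq> 0" using K nb by simp
        then show ?thesis by (simp add: e_def divide_simps)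
      qed
      also have "\<dots> < 1" using nb by simp
      finally have c1: "c < 1" by (simp add: c_def)
      have "norm x \<le> c * norm x" using 1 eq by (simp only:)
      then have "(1 - c) * norm x \<le> 0" by (simp add: algebra_simps)
      then have "norm x \<le> 0" using c1 by (simp add: mult_le_0_iff)
      then show "x = 0" by simp
    qed
    then show "W' \<in> {W. qinvertible W}" by simp
  qed
  then show "\<exists>e>0. ball W e \<subseteq> {W. qinvertible W}" using e by blast
qed

lemma qinv_deriv:
  fixes W0 :: "quat^'n::finite^'n"
  assumes W0: "qinvertible W0"
  shows "(qinv has_derivative (\<lambda>h. - qmat_mul (qinv W0) (qmat_mul h (qinv W0)))) (at W0)"
proof -
  define J where "J = qinv W0"
  have WJ: "qmat_mul W0 J = qmat_id" and JW: "qmat_mul J W0 = qmat_id"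
    using qinv_props[OF W0] J_def by auto
  define F :: "'n qsq \<times> 'n qsq \<Rightarrow> 'n qsq \<times> 'n qsq"
    where "F = (\<lambda>p. (fst p, qmat_mul (fst p) (snd p)))"
  define G :: "'n qsq \<times> 'n qsq \<Rightarrow> 'n qsq \<times> 'n qsq"
    where "G = (\<lambda>p. (fst p, qmat_mul (qinv (fst p)) (snd p)))"
  define F' :: "'n qsq \<times> 'n qsq \<Rightarrow> 'n qsq \<times> 'n qsq"
    where "F' = (\<lambda>h. (fst h, qmat_mul W0 (snd h) + qmat_mul (fst h) J))"
  define G' :: "'n qsq \<times> 'n qsq \<Rightarrow> 'n qsq \<times> 'n qsq"
    where "G' = (\<lambda>h. (fst h, qmat_mul J (snd h - qmat_mul (fst h) J)))"
  define S :: "('n qsq \<times> 'n qsq) set" where "S = {W. qinvertible W} \<times> UNIV"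
  have Fd: "(F has_derivative (\<lambda>h. (fst h, qmat_mul (fst x) (snd h) + qmat_mul (fst h) (snd x)))) (at x)" for x
  proof -
    have 1: "((\<lambda>p. fst p) has_derivative (\<lambda>h. fst h)) (at x)"
      by (rule has_derivative_fst[OF has_derivative_ident])
    have 2: "((\<lambda>p. snd p) has_derivative (\<lambda>h. snd h)) (at x)"
      by (rule has_derivative_snd[OF has_derivative_ident])
    show ?thesis unfolding F_def by (rule has_derivative_Pair[OF 1 mmD[OF 1 2]])
  qed
  have "open S" unfolding S_def by (intro open_Times open_qinvertible open_UNIV)
  moreover have "(W0, J) \<in> S" using W0 by (simp add: S_def)
  moreover have "continuous_on S F"
    by (intro continuous_at_imp_continuous_on ballI has_derivative_continuous[OF Fd])
  moreover have "\<And>x. x \<in> S \<Longrightarrow> G (F x) = x"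
  proof -
    fix x assume "x \<in> S"
    then have "qinvertible (fst x)" by (simp add: S_def mem_Times_iff)
    from qinv_props[OF this] show "G (F x) = x"
      by (simp add: F_def G_def qmat_mul_assoc[symmetric])
  qed
  moreover have "(F has_derivative F') (at (W0, J))"
    using Fd[of "(W0,J)"] by (simp add: F'_def)
  moreover have "F' \<circ> G' = id"
    by (rule ext) (simp add: F'_def G'_def mm_simps qmat_mul_assoc[symmetric] WJ)
  ultimately have "(G has_derivative G') (at (F (W0, J)))"
    by (rule has_derivative_inverse_strong)
  then have Gd: "(G has_derivative G') (at (W0, qmat_id))"
    by (simp add: F_def WJ)
  have P: "((\<lambda>W. (W, qmat_id)) has_derivative (\<lambda>h. (h, 0))) (at W0)"
    by (intro has_derivative_Pair has_derivative_ident has_derivative_const)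
  have "((\<lambda>W. G (W, qmat_id)) has_derivative (\<lambda>h. G' (h, 0))) (at W0)"
    using has_derivative_compose[OF P, of G G'] Gd by simp
  from has_derivative_snd[OF this]
  have "((\<lambda>W. snd (G (W, qmat_id))) has_derivative (\<lambda>h. snd (G' (h, 0)))) (at W0)" .
  moreover have "(\<lambda>W. snd (G (W, qmat_id))) = qinv" by (simp add: G_def)
  moreover have "(\<lambda>h. snd (G' (h, 0))) = (\<lambda>h. - qmat_mul (qinv W0) (qmat_mul h (qinv W0)))"
    by (simp add: G'_def J_def mm_simps)
  ultimately show ?thesis by simp
qed



lemma blinfun_deriv_basis:
  fixes F :: "'a::real_normed_vector \<Rightarrow> 'c::euclidean_space \<Rightarrow>\<^sub>L 'd::real_normed_vector"
  assumes lin: "bounded_linear F'"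
    and d: "\<And>b. b \<in> Basis \<Longrightarrow> ((\<lambda>y. blinfun_apply (F y) b) has_derivative (\<lambda>k. blinfun_apply (F' k) b)) (at x)"
  shows "(F has_derivative F') (at x)"
  unfolding has_derivative_at_within
proof (intro conjI lin)
  show "((\<lambda>y. (F y - F x - F' (y - x)) /\<^sub>R norm (y - x)) \<longlongrightarrow> 0) (at x)"
  proof (rule tendsto_componentwise1)
    fix b :: 'c assume b: "b \<in> Basis"
    from d[OF b] have "((\<lambda>y. (F y b - F x b - F' (y - x) b) /\<^sub>R norm (y - x)) \<longlongrightarrow> 0) (at x)"
      unfolding has_derivative_at_within by blast
    then show "((\<lambda>y. ((F y - F x - F' (y - x)) /\<^sub>R norm (y - x)) b) \<longlongrightarrow> blinfun_apply 0 b) (at x)"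
      by (simp add: blinfun.diff_left blinfun.scaleR_left)
  qed
qed

lemma sum_Basis_prod_gen:
  fixes f :: "('a::euclidean_space \<times> 'b::euclidean_space) \<Rightarrow> 'c::comm_monoid_add"
  shows "sum f Basis = sum (\<lambda>i. f (i, 0)) Basis + sum (\<lambda>i. f (0, i)) Basis"
proof -
  have "inj_on (\<lambda>u. (u::'a, 0::'b)) Basis" "inj_on (\<lambda>u. (0::'a, u::'b)) Basis"
    by (auto intro!: inj_onI Pair_inject)
  thus ?thesis
    unfolding Basis_prod_def
    by (subst sum.union_disjoint) (auto simp: Basis_prod_def sum.reindex)
qed

definition JJ :: "('p::finite,'r::finite) qblock \<Rightarrow> quat^'p^'p" where
  "JJ Q = qinv (fst Q - fst (snd Q))"
definition dd :: "('p::finite,'r::finite) qblock \<Rightarrow> quat^'p^'p" where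
  "dd h = fst h - fst (snd h)"
definition dJ :: "('p::finite,'r::finite) qblock \<Rightarrow> ('p,'r) qblock \<Rightarrow> quat^'p^'p" where
  "dJ Q k = - qmat_mul (JJ Q) (qmat_mul (dd k) (JJ Q))"
definition d1f :: "('p::finite,'r::finite) qblock \<Rightarrow> ('p,'r) qblock \<Rightarrow> quat^'p^'r" where
  "d1f Q h = qmat_mul (snd (snd h)) (JJ Q) - qmat_mul (snd (snd Q)) (qmat_mul (JJ Q) (qmat_mul (dd h) (JJ Q)))"
definition d2f :: "('p::finite,'r::finite) qblock \<Rightarrow> ('p,'r) qblock \<Rightarrow> ('p,'r) qblock \<Rightarrow> quat^'p^'r" where
  "d2f Q k h = qmat_mul (snd (snd h)) (dJ Q k)
     - (qmat_mul (snd (snd Q)) (qmat_mul (JJ Q) (qmat_mul (dd h) (dJ Q k)) + qmat_mul (dJ Q k) (qmat_mul (dd h) (JJ Q)))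
        + qmat_mul (snd (snd k)) (qmat_mul (JJ Q) (qmat_mul (dd h) (JJ Q))))"

lemma dd_deriv: "(dd has_derivative dd) (at Q)"
proof -
  have "((\<lambda>Q. fst Q - fst (snd Q)) has_derivative (\<lambda>h. fst h - fst (snd h))) (at Q)"
    by (auto intro!: derivative_eq_intros)
  then show ?thesis by (simp add: dd_def[abs_def])
qed

lemma JJ_deriv:
  assumes "qinvertible (fst Q - fst (snd Q))"
  shows "(JJ has_derivative dJ Q) (at Q)"
proof -
  have "((\<lambda>x. qinv (dd x)) has_derivative (\<lambda>x. - qmat_mul (qinv (dd Q)) (qmat_mul (dd x) (qinv (dd Q))))) (at Q)"
    using has_derivative_compose[OF dd_deriv qinv_deriv] assms by (simp add: dd_def)
  then show ?thesis by (simp add: JJ_def[abs_def] dJ_def[abs_def] dd_def)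
qed

lemma dd_lin: "dd (x + y) = dd x + dd y" "dd (c *\<^sub>R x) = c *\<^sub>R dd x" "dd (- x) = - dd x" "dd 0 = 0"
  by (auto simp: dd_def algebra_simps)

lemma dJ_lin: "dJ Q (x + y) = dJ Q x + dJ Q y" "dJ Q (c *\<^sub>R x) = c *\<^sub>R dJ Q x"
  by (auto simp: dJ_def dd_lin mm_simps algebra_simps)

lemma d1f_bl: "bounded_linear (d1f Q)"
  unfolding linear_conv_bounded_linear[symmetric]
  by (rule linearI) (auto simp: d1f_def dd_lin mm_simps algebra_simps)

lemma d2f_bl: "bounded_linear (d2f Q k)"
  unfolding linear_conv_bounded_linear[symmetric]
  by (rule linearI) (auto simp: d2f_def dd_lin mm_simps algebra_simps)

lemma d2f_lin: "d2f Q (x + y) h = d2f Q x h + d2f Q y h" "d2f Q (c *\<^sub>R x) h = c *\<^sub>R d2f Q x h"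
  by (auto simp: d2f_def dJ_lin mm_simps algebra_simps)

lemma D2_bl: "bounded_linear (\<lambda>k. Blinfun (d2f Q k))"
  unfolding linear_conv_bounded_linear[symmetric]
proof (rule linearI)
  fix x y :: "('a::finite,'b::finite) qblock" and c :: real
  show "Blinfun (d2f Q (x + y)) = Blinfun (d2f Q x) + Blinfun (d2f Q y)"
    by (rule blinfun_eqI) (simp add: bounded_linear_Blinfun_apply d2f_bl plus_blinfun.rep_eq d2f_lin)
  show "Blinfun (d2f Q (c *\<^sub>R x)) = c *\<^sub>R Blinfun (d2f Q x)"
    by (rule blinfun_eqI) (simp add: bounded_linear_Blinfun_apply d2f_bl scaleR_blinfun.rep_eq d2f_lin)
qed

lemma Phi_eq: "Phi = (\<lambda>Q. qmat_mul (snd (snd Q)) (JJ Q))"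
  by (auto simp: fun_eq_iff Phi_def JJ_def split: prod.splits)

lemma snd2_deriv: "((\<lambda>y::('p::finite,'r::finite) qblock. snd (snd y)) has_derivative (\<lambda>h. snd (snd h))) (at Q)"
  by (auto intro!: derivative_eq_intros)

lemma Phi_deriv:
  assumes "qinvertible (fst Q - fst (snd Q))"
  shows "(Phi has_derivative d1f Q) (at Q)"
  unfolding Phi_eq
  by (rule has_derivative_eq_rhs[OF mmD[OF snd2_deriv JJ_deriv[OF assms]]])
     (simp add: fun_eq_iff d1f_def dJ_def mm_simps)

lemma D1_deriv:
  assumes "qinvertible (fst Q - fst (snd Q))"
  shows "((\<lambda>y. Blinfun (d1f y)) has_derivative (\<lambda>k. Blinfun (d2f Q k))) (at Q)"
proof (rule blinfun_deriv_basis[OF D2_bl])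
  fix b :: "('a,'b) qblock"
  have "((\<lambda>y. qmat_mul (snd (snd b)) (JJ y) - qmat_mul (snd (snd y)) (qmat_mul (JJ y) (qmat_mul (dd b) (JJ y))))
     has_derivative (\<lambda>k. d2f Q k b)) (at Q)"
    by (rule has_derivative_eq_rhs[OF has_derivative_diff[OF mmD[OF has_derivative_const JJ_deriv[OF assms]]
         mmD[OF snd2_deriv mmD[OF JJ_deriv[OF assms] mmD[OF has_derivative_const JJ_deriv[OF assms]]]]]])
       (simp add: fun_eq_iff d2f_def mm_simps algebra_simps)
  then show "((\<lambda>y. blinfun_apply (Blinfun (d1f y)) b) has_derivative (\<lambda>k. blinfun_apply (Blinfun (d2f Q k)) b)) (at Q)"
    by (simp add: bounded_linear_Blinfun_apply d1f_bl d2f_bl d1f_def)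
qed

lemma lap_zero: fixes Q :: "('p::finite,'r::finite) qblock" shows "(\<Sum>b\<in>Basis. usig b *\<^sub>R d2f Q b b) = 0"
proof -
  have 1: "usig (i, 0) = -1" if "i \<in> Basis" for i :: "quat^'p^'p"
    using that nonzero_Basis by (force simp: usig_def)
  have e1: "d2f Q (0, j, 0) (0, j, 0) = d2f Q (j, 0) (j, 0)" for j
    by (simp add: d2f_def dJ_def dd_def mm_simps)
  have e2: "d2f Q (0, 0, c) (0, 0, c) = 0" for c
    by (simp add: d2f_def dJ_def dd_def mm_simps)
  have u0: "usig (0 :: quat^'p^'p, v) = 1" for v :: "(quat^'p^'p) \<times> (quat^'p^'r)"
    by (simp add: usig_def)
  have s1: "(\<Sum>i\<in>Basis. usig (i, 0 :: (quat^'p^'p) \<times> (quat^'p^'r)) *\<^sub>R d2f Q (i, 0) (i, 0))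
      = (\<Sum>i\<in>Basis. - d2f Q (i, 0) (i, 0))"
    by (rule sum.cong) (simp_all add: 1)
  show ?thesis
    by (simp add: sum_Basis_prod_gen s1 u0 e1 e2 sum_negf)
qed

lemma harmonic: "semi_harmonic_on usig (Upq :: ('p::finite,'r::finite) qblock set) Phi"
  unfolding semi_harmonic_on_def
proof (intro exI ballI conjI)
  fix Q :: "('p,'r) qblock" assume Q: "Q \<in> Upq"
  obtain Q0 Q1 Q2 where QQ: "Q = (Q0,Q1,Q2)" by (cases Q) auto
  have W: "qinvertible (fst Q - fst (snd Q))" using Q QQ Upq_invertible by simp
  show "(Phi has_derivative blinfun_apply (Blinfun (d1f Q))) (at Q)"
    by (simp add: bounded_linear_Blinfun_apply d1f_bl Phi_deriv[OF W])
  show "((\<lambda>y. Blinfun (d1f y)) has_derivative (\<lambda>k. Blinfun (d2f Q k))) (at Q)"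
    by (rule D1_deriv[OF W])
  show "(\<Sum>b\<in>Basis. usig b *\<^sub>R blinfun_apply (Blinfun (d2f Q b)) b) = 0"
    by (simp add: bounded_linear_Blinfun_apply d2f_bl lap_zero)
qed


theorem lemma6p1:
  shows "(\<forall>Q\<in>(Upq :: ('p::finite,'r::finite) qblock set). \<forall>g::quat^'p^'p.
            qinvertible g \<longrightarrow> Phi (gact Q g) = Phi Q)
         \<and> semi_harmonic_on usig (Upq :: ('p,'r) qblock set) Phi"
  using invariance harmonic by blast

end
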